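(* Let $q$ be a prime power and let $C$ be an $[n,k,d]_q$ Griesmer optimal linear code with $k\ge 3$. Then: (1) if $\Gamma_q(n,k,d)<k$, then $q\mid d$; (2) if $q\nmid d$, then $C$ is a Griesmer code, i.e. $n=g_q(k,d)$.
   Context: An $[n,k,d]_q$ linear code is a $k$-dimensional subspace of $\mathbb{F}_q^n$ with minimum nonzero Hamming weight $d$. Let $g_q(k,d)=\sum_{i=0}^{k-1}\lceil d/q^i\rceil$ (the Griesmer bound says $n\ge g_q(k,d)$ for every $[n,k,d]_q$ code). $C$ is a Griesmer code if $n=g_q(k,d)$, and Griesmer optimal if $n<g_q(k,d+1)$ (so the Griesmer bound rules out an $[n,k,d+1]_q$ code). For a Griesmer optimal $[n,k,d]_q$ code, $\Gamma_q(n,k,d)=k$ if $n=g_q(k,d)$; otherwise $\Gamma_q(n,k,d)$ is the smallest non-negative integer $k_1$ such that $n-g_q(k_1,d)\ge g_q\!\left(k-k_1,\lceil d/q^{k_1}\rceil+1\right)$ (with $g_q(0,\cdot)=0$). *)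

theory Defs
  imports "HOL-Analysis.Analysis"
begin

definition ceil_div :: "nat \<Rightarrow> nat \<Rightarrow> nat" where
  "ceil_div a b = (a + b - 1) div b"

definition griesmer :: "nat \<Rightarrow> nat \<Rightarrow> nat \<Rightarrow> nat" where
  "griesmer q k d = (\<Sum>i<k. ceil_div d (q ^ i))"

definition hamming_wt :: "('a::zero) ^ 'n \<Rightarrow> nat" where
  "hamming_wt v = card {i. v $ i \<noteq> 0}"

definition min_wt :: "(('a::zero) ^ 'n) set \<Rightarrow> nat" where
  "min_wt C = Min {hamming_wt v | v. v \<in> C \<and> v \<noteq> 0}"

definition linear_code :: "(('a::{finite,field}) ^ 'n) set \<Rightarrow> nat \<Rightarrow> nat \<Rightarrow> bool" where
  "linear_code C k d \<longleftrightarrow> vec.subspace C \<and> vec.dim C = k \<and> min_wt C = d"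

definition griesmer_optimal :: "nat \<Rightarrow> nat \<Rightarrow> nat \<Rightarrow> nat \<Rightarrow> bool" where
  "griesmer_optimal q n k d \<longleftrightarrow> n < griesmer q k (d + 1)"

definition Gamma :: "nat \<Rightarrow> nat \<Rightarrow> nat \<Rightarrow> nat \<Rightarrow> nat" where
  "Gamma q n k d =
     (if n = griesmer q k d then k
      else (LEAST k1. int n - int (griesmer q k1 d)
                        \<ge> int (griesmer q (k - k1) (ceil_div d (q ^ k1) + 1))))"

end

theory Submission
  imports Defs
begin

lemma ceil_div_le_iff:
  assumes "b > 0" shows "ceil_div a b \<le> t \<longleftrightarrow> a \<le> b * t"
proof -
  have "ceil_div a b \<le> t \<longleftrightarrow> (a + b - 1) div b < Suc t" unfolding ceil_div_def by (rule less_Suc_eq_le[symmetric])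
  also have "\<dots> \<longleftrightarrow> a + b - 1 < Suc t * b" using assms by (simp add: div_less_iff_less_mult)
  also have "\<dots> \<longleftrightarrow> a \<le> b * t" using assms by (auto simp: algebra_simps)
  finally show ?thesis .
qed

lemma ceil_div_eqI:
  assumes "\<And>t. x \<le> t \<longleftrightarrow> y \<le> t" shows "x = (y::nat)"
  using assms[of x] assms[of y] by simp

lemma ceil_div_ceil_div:
  assumes "q > 0" "Q > 0"
  shows "ceil_div (ceil_div d q) Q = ceil_div d (q * Q)"
  apply (rule ceil_div_eqI)
  using assms by (simp add: ceil_div_le_iff mult.assoc)

lemma griesmer_Suc:
  assumes "q > 0"
  shows "griesmer q (Suc k) d = d + griesmer q k (ceil_div d q)"
proof -
  have "griesmer q (Suc k) d = (\<Sum>i<Suc k. ceil_div d (q ^ i))" by (simp add: griesmer_def)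
  also have "\<dots> = ceil_div d (q^0) + (\<Sum>i<k. ceil_div d (q ^ Suc i))"
    by (rule sum.lessThan_Suc_shift)
  also have "ceil_div d (q^0) = d" by (simp add: ceil_div_def)
  also have "(\<Sum>i<k. ceil_div d (q ^ Suc i)) = griesmer q k (ceil_div d q)"
    unfolding griesmer_def using assms by (intro sum.cong) (simp_all add: ceil_div_ceil_div)
  finally show ?thesis .
qed

lemma griesmer_plus1:
  assumes "q > 0" "\<not> q dvd d" "k \<ge> 1"
  shows "griesmer q k (d + 1) = griesmer q k d + 1"
proof -
  have eq: "ceil_div (d+1) (q^i) = ceil_div d (q^i) + (if i = 0 then 1 else 0)" for i
  proof (cases i)
    case 0 then show ?thesis by (simp add: ceil_div_def)
  next
    case (Suc j)
    have nd: "d \<noteq> q^i * t" for t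
    proof
      assume "d = q^i * t"
      then have "q dvd d" using Suc by simp
      with assms show False by simp
    qed
    have "ceil_div (d+1) (q^i) = ceil_div d (q^i)"
      apply (rule ceil_div_eqI)
      using assms nd by (simp add: ceil_div_le_iff) (metis Suc_leI le_neq_implies_less Suc_leD)
    then show ?thesis using Suc by simp
  qed
  have "griesmer q k (d+1) = (\<Sum>i<k. ceil_div d (q^i) + (if i = 0 then 1 else 0))"
    unfolding griesmer_def by (rule sum.cong[OF refl eq])
  also have "\<dots> = griesmer q k d + (\<Sum>i<k. (if i = 0 then 1 else 0))"
    by (simp add: sum.distrib griesmer_def)
  also have "(\<Sum>i<k. (if i = 0 then 1 else 0)) = (1::nat)"
    using assms(3) by (simp add: sum.delta)
  finally show ?thesis .
qed

definition wtS :: "'n set \<Rightarrow> ('a::zero) ^ 'n \<Rightarrow> nat" where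
  "wtS S v = card {i\<in>S. v $ i \<noteq> 0}"

lemma count_zeros:
  fixes v c :: "('a::{finite,field}) ^ 'n"
  assumes P: "\<And>i. i \<in> P \<Longrightarrow> c $ i \<noteq> 0" and fP: "finite P"
  shows "(\<Sum>a\<in>UNIV. card {i\<in>P. v $ i + a * c $ i = 0}) = card P"
proof -
  have "(\<Sum>a\<in>UNIV. card {i\<in>P. v $ i + a * c $ i = 0})
      = (\<Sum>a\<in>UNIV. \<Sum>i\<in>P. (if v $ i + a * c $ i = 0 then 1 else 0::nat))"
    using fP by (simp add: sum.If_cases Int_def conj_commute)
  also have "\<dots> = (\<Sum>i\<in>P. \<Sum>a\<in>UNIV. (if v $ i + a * c $ i = 0 then 1 else 0::nat))"
    by (rule sum.swap)
  also have "\<dots> = (\<Sum>i\<in>P. 1)"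
  proof (rule sum.cong[OF refl])
    fix i assume "i \<in> P"
    then have ci: "c $ i \<noteq> 0" by (rule P)
    have "{a. v $ i + a * c $ i = 0} = {- v $ i / c $ i}"
      using ci by (auto simp: field_simps eq_neg_iff_add_eq_0)
    then show "(\<Sum>a\<in>UNIV. (if v $ i + a * c $ i = 0 then 1 else 0::nat)) = 1"
      by (simp add: sum.If_cases)
  qed
  finally show ?thesis by simp
qed

lemma exists_many_zeros:
  fixes v c :: "('a::{finite,field}) ^ 'n"
  assumes P: "\<And>i. i \<in> P \<Longrightarrow> c $ i \<noteq> 0" and fP: "finite P"
  shows "\<exists>a. card P \<le> CARD('a) * card {i\<in>P. v $ i + a * c $ i = 0}"
proof (rule ccontr)
  assume "\<not> ?thesis"
  then have lt: "CARD('a) * card {i\<in>P. v $ i + a * c $ i = 0} < card P" for a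
    by (simp add: not_le)
  have "CARD('a) * card P = (\<Sum>a\<in>UNIV. CARD('a) * card {i\<in>P. v $ i + a * c $ i = 0})"
    using count_zeros[OF P fP, of v] by (simp add: sum_distrib_left[symmetric])
  also have "\<dots> < (\<Sum>a\<in>(UNIV::'a set). card P)"
    by (rule sum_strict_mono) (auto intro: lt)
  also have "\<dots> = CARD('a) * card P" by simp
  finally show False by simp
qed

lemma griesmer_bound_gen:
  fixes V :: "(('a::{finite,field}) ^ 'n) set" and S :: "'n set"
  assumes "vec.subspace V" "vec.dim V = k" "1 \<le> d"
    "\<And>v. v \<in> V \<Longrightarrow> v \<noteq> 0 \<Longrightarrow> d \<le> wtS S v"
  shows "griesmer CARD('a) k d \<le> card S"
  using assms
proof (induction k arbitrary: V S d)
  case 0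
  then show ?case by (simp add: griesmer_def)
next
  case (Suc k)
  let ?q = "CARD('a)"
  have q0: "?q > 0" by simp
  have "\<not> V \<subseteq> {0}" using Suc.prems(2) by (metis vec.dim_eq_0 nat.distinct(1))
  then obtain c0 where c0: "c0 \<in> V" "c0 \<noteq> 0" by blast
  define W where "W = {wtS S v | v. v \<in> V \<and> v \<noteq> 0}"
  have fW: "finite W" unfolding W_def by simp
  have "W \<noteq> {}" using c0 unfolding W_def by blast
  then have "Min W \<in> W" using fW by simp
  then obtain c where c: "c \<in> V" "c \<noteq> 0" "wtS S c = Min W" unfolding W_def by (smt (verit) mem_Collect_eq)
  define w where "w = wtS S c"
  have wmin: "\<And>v. v \<in> V \<Longrightarrow> v \<noteq> 0 \<Longrightarrow> w \<le> wtS S v"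
    unfolding w_def c(3) using fW W_def by (auto intro: Min_le)
  have dw: "d \<le> w" unfolding w_def using Suc.prems(4)[OF c(1,2)] .
  define P where "P = {i\<in>S. c $ i \<noteq> 0}"
  define T where "T = {i\<in>S. c $ i = 0}"
  have cardS: "card S = w + card T"
  proof -
    have "S = P \<union> T" "P \<inter> T = {}" unfolding P_def T_def by auto
    then have "card S = card P + card T" by (simp add: card_Un_disjoint)
    then show ?thesis unfolding w_def wtS_def P_def by simp
  qed
  have indc: "vec.independent {c}"
    using c(2) by (simp add: vec.independent_insert)
  obtain B where B: "{c} \<subseteq> B" "B \<subseteq> V" "vec.independent B" "V \<subseteq> vec.span B"
    using vec.maximal_independent_subset_extend[of "{c}" V] c(1) indc by auto
  have fB: "finite B" by simp
  have "vec.dim V = card B" using vec.dim_unique[OF B(2) B(4) B(3) refl] .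
  then have cB: "card B = Suc k" using Suc.prems(2) by simp
  define V' where "V' = vec.span (B - {c})"
  have indB': "vec.independent (B - {c})" using B(3) vec.independent_mono by blast
  have dV': "vec.dim V' = k"
    unfolding V'_def using vec.dim_span_eq_card_independent[OF indB'] cB B(1) fB by simp
  have cnot: "c \<notin> V'"
  proof -
    have "insert c (B - {c}) = B" using B(1) by auto
    then have "vec.independent (insert c (B - {c}))" using B(3) by simp
    moreover have "c \<notin> B - {c}" by simp
    ultimately show ?thesis unfolding V'_def using vec.independent_insert[of c "B - {c}"]
      by (metis (full_types))
  qed
  have V'V: "V' \<subseteq> V"
  proof -
    have "V' \<subseteq> vec.span V" unfolding V'_def using B(2) by (intro vec.span_mono) auto
    then show ?thesis using Suc.prems(1) by (metis vec.span_eq_iff)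
  qed
  define d' where "d' = ceil_div d ?q"
  have d'1: "1 \<le> d'"
  proof (rule ccontr)
    assume "\<not> 1 \<le> d'"
    then have "d' \<le> 0" by simp
    then have "d \<le> ?q * 0" unfolding d'_def using q0 ceil_div_le_iff by blast
    then show False using Suc.prems(3) by simp
  qed
  have key: "d' \<le> wtS T v" if v: "v \<in> V'" "v \<noteq> 0" for v
  proof -
    have fP: "finite P" by simp
    obtain a where a: "card P \<le> ?q * card {i\<in>P. v $ i + a * c $ i = 0}"
      using exists_many_zeros[of P c v] fP unfolding P_def by auto
    define z where "z = card {i\<in>P. v $ i + a * c $ i = 0}"
    define u where "u = v + a *s c"
    have "v \<in> V" using V'V v(1) by blast
    moreover have "a *s c \<in> V" using Suc.prems(1) c(1) by (rule vec.subspace_scale)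
    ultimately have uV: "u \<in> V" unfolding u_def by (rule vec.subspace_add[OF Suc.prems(1)])
    have u0: "u \<noteq> 0"
    proof
      assume "u = 0"
      then have "v = - a *s c" unfolding u_def by (simp add: eq_neg_iff_add_eq_0 vec_eq_iff)
      moreover have "a \<noteq> 0" using v(2) \<open>u = 0\<close> unfolding u_def by auto
      ultimately have "c = (- inverse a) *s v" by (simp add: vec_eq_iff)
      moreover have "(- inverse a) *s v \<in> V'" using v(1) unfolding V'_def by (rule vec.span_scale)
      ultimately have "c \<in> V'" by simp
      with cnot show False by simp
    qed
    have "w \<le> wtS S u" using wmin uV u0 by simp
    also have "wtS S u = wtS T v + (card P - z)"
    proof -
      have e: "{i\<in>S. u $ i \<noteq> 0} = {i\<in>T. v $ i \<noteq> 0} \<union> {i\<in>P. v $ i + a * c $ i \<noteq> 0}"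
        unfolding u_def T_def P_def by auto
      have "card {i\<in>S. u $ i \<noteq> 0} = card {i\<in>T. v $ i \<noteq> 0} + card {i\<in>P. v $ i + a * c $ i \<noteq> 0}"
        unfolding e by (rule card_Un_disjoint) (auto simp: T_def P_def)
      moreover have "card {i\<in>P. v $ i + a * c $ i \<noteq> 0} + z = card P"
      proof -
        have "P = {i\<in>P. v $ i + a * c $ i \<noteq> 0} \<union> {i\<in>P. v $ i + a * c $ i = 0}" by auto
        then have "card P = card {i\<in>P. v $ i + a * c $ i \<noteq> 0} + card {i\<in>P. v $ i + a * c $ i = 0}"
          by (metis (no_types, lifting) card_Un_disjoint disjoint_iff finite mem_Collect_eq)
        then show ?thesis unfolding z_def by simp
      qed
      ultimately show ?thesis unfolding wtS_def by simp
    qed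
    finally have "w \<le> wtS T v + (card P - z)" .
    moreover have "card P = w" unfolding w_def wtS_def P_def by simp
    moreover have "z \<le> card P" unfolding z_def by (rule card_mono) auto
    ultimately have "z \<le> wtS T v" by simp
    then have "?q * z \<le> ?q * wtS T v" by simp
    moreover have "d \<le> ?q * z" using a dw \<open>card P = w\<close> unfolding z_def by simp
    ultimately have "d \<le> ?q * wtS T v" by (meson le_trans mult_le_mono2)
    then show ?thesis unfolding d'_def using q0 by (simp add: ceil_div_le_iff)
  qed
  have IH: "griesmer ?q k d' \<le> card T"
    using Suc.IH[of V' d' T] V'_def dV' d'1 key by auto
  show ?case using griesmer_Suc[OF q0, of k d] IH cardS dw unfolding d'_def by simp
qed


theorem lemma5:
  fixes C :: "(('a::{finite,field}) ^ 'n) set" and k d :: nat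
  defines "q \<equiv> CARD('a)" and "n \<equiv> CARD('n)"
  assumes code: "linear_code C k d"
    and opt: "griesmer_optimal q n k d"
    and k3: "k \<ge> 3"
  shows "(Gamma q n k d < k \<longrightarrow> q dvd d) \<and> (\<not> q dvd d \<longrightarrow> n = griesmer q k d)"
proof -
  have sub: "vec.subspace C" and dim: "vec.dim C = k" and md: "min_wt C = d"
    using code unfolding linear_code_def by auto
  have q0: "q > 0" unfolding q_def by simp
  have "\<not> C \<subseteq> {0}" using dim k3 by (metis vec.dim_eq_0 not_numeral_le_zero)
  then obtain c0 where c0: "c0 \<in> C" "c0 \<noteq> 0" by blast
  define W where "W = {hamming_wt v | v. v \<in> C \<and> v \<noteq> 0}"
  have fW: "finite W" unfolding W_def by simp
  have "W \<noteq> {}" using c0 unfolding W_def by blast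
  have dle: "d \<le> hamming_wt v" if "v \<in> C" "v \<noteq> 0" for v
    using md fW that unfolding min_wt_def W_def[symmetric] by (auto simp: W_def intro: Min_le)
  have pos: "1 \<le> hamming_wt v" if v0: "v \<noteq> 0" for v
  proof -
    obtain i where "v $ i \<noteq> 0" using v0 vec_eq_iff[of v 0] by auto
    then have "{i. v $ i \<noteq> 0} \<noteq> {}" by blast
    then show ?thesis unfolding hamming_wt_def by (simp add: Suc_le_eq card_gt_0_iff)
  qed
  have "Min W \<in> W" using fW \<open>W \<noteq> {}\<close> by simp
  then have d1: "1 \<le> d" using md pos unfolding min_wt_def W_def[symmetric] by (auto simp: W_def)
  have hw: "hamming_wt v = wtS UNIV v" for v :: "'a ^ 'n"
    unfolding hamming_wt_def wtS_def by simp
  have gb: "griesmer q k d \<le> n"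
    unfolding q_def n_def using griesmer_bound_gen[OF sub dim d1, of UNIV] dle hw by simp
  have two: "\<not> q dvd d \<longrightarrow> n = griesmer q k d"
  proof
    assume nd: "\<not> q dvd d"
    have "griesmer q k (d + 1) = griesmer q k d + 1" using griesmer_plus1[OF q0 nd] k3 by simp
    then show "n = griesmer q k d" using opt gb unfolding griesmer_optimal_def by simp
  qed
  moreover have "Gamma q n k d < k \<longrightarrow> q dvd d"
  proof
    assume "Gamma q n k d < k"
    then have "n \<noteq> griesmer q k d" unfolding Gamma_def by auto
    then show "q dvd d" using two by blast
  qed
  ultimately show ?thesis by blast
qed

end
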